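(* Let $U$ be a harmonic function on a domain $\Omega\subset\mathbb{R}^n$ with no critical points. Let $\alpha:(-\delta,\delta)\to\Omega$ be an integral curve of the vector field $\nabla U/\|\nabla U\|$. Then for every $s\in(-\delta,\delta)$, \[ \|\nabla U(\alpha(s))\|=\|\nabla U(\alpha(0))\|\exp\left((n-1)\int_0^s H(\alpha(\xi))\,d\xi\right), \] where for $p\in\Omega$, $H(p)$ is the mean curvature at $p$ of the level hypersurface $\{U=U(p)\}$ oriented by the unit normal field $\mathbf{N}=\nabla U/\|\nabla U\|$.
   Context: Mean curvature convention: for a hypersurface $M$ oriented by unit normal $\mathbf{N}$, $p\in M$ and a unit tangent vector $\mathbf{v}\in T_pM$, the normal section $M\cap\Pi_{\mathbf{v}}$ (where $\Pi_{\mathbf{v}}$ is the plane through $p$ spanned by $\mathbf{v}$ and $\mathbf{N}(p)$) has signed curvature $\kappa_p(\mathbf{v})=\langle c''(0),\mathbf{N}(p)\rangle$ for its unit-speed parametrization $c$ with $c(0)=p$, $c'(0)=\mathbf{v}$ (for a level set of $f$ with $\mathbf{N}=\nabla f/\|\nabla f\|$ this equals $-D^2_{\mathbf{v}}f(p)/\|\nabla f(p)\|$). $H(p)$ is the average of $\kappa_p(\mathbf{v})$ over the unit sphere of $T_pM$ (equivalently, $\frac{1}{n-1}$ times the sum of principal curvatures). The curve $\alpha$ has unit speed. *)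

theory Defs
  imports "HOL-Analysis.Analysis"
begin

definition grad :: "('a::euclidean_space \<Rightarrow> real) \<Rightarrow> 'a \<Rightarrow> 'a" where
  "grad U x = (\<Sum>b\<in>Basis. frechet_derivative U (at x) b *\<^sub>R b)"

definition second_dir_deriv :: "('a::euclidean_space \<Rightarrow> real) \<Rightarrow> 'a \<Rightarrow> 'a \<Rightarrow> real" where
  "second_dir_deriv U p v = frechet_derivative (grad U) (at p) v \<bullet> v"

definition laplacian :: "('a::euclidean_space \<Rightarrow> real) \<Rightarrow> 'a \<Rightarrow> real" where
  "laplacian U x = (\<Sum>b\<in>Basis. second_dir_deriv U x b)"

definition C2_on :: "'a::euclidean_space set \<Rightarrow> ('a \<Rightarrow> real) \<Rightarrow> bool" where
  "C2_on \<Omega> U \<longleftrightarrow>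
     (\<forall>x\<in>\<Omega>. U differentiable (at x)) \<and>
     (\<forall>x\<in>\<Omega>. grad U differentiable (at x)) \<and>
     (\<forall>u v. continuous_on \<Omega> (\<lambda>x. frechet_derivative (grad U) (at x) u \<bullet> v))"

definition harmonic_on :: "'a::euclidean_space set \<Rightarrow> ('a \<Rightarrow> real) \<Rightarrow> bool" where
  "harmonic_on \<Omega> U \<longleftrightarrow> open \<Omega> \<and> C2_on \<Omega> U \<and> (\<forall>x\<in>\<Omega>. laplacian U x = 0)"

definition level_tangent :: "('a::euclidean_space \<Rightarrow> real) \<Rightarrow> 'a \<Rightarrow> 'a set" where
  "level_tangent U p = {v. v \<bullet> grad U p = 0}"

text \<open>Normal curvature of the level set {U = U p}, oriented by N = grad U / |grad U|,
  in direction of the unit tangent vector v:  kappa_p(v) = - D^2_v U(p) / |grad U(p)|.\<close>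
definition normal_curvature :: "('a::euclidean_space \<Rightarrow> real) \<Rightarrow> 'a \<Rightarrow> 'a \<Rightarrow> real" where
  "normal_curvature U p v = - second_dir_deriv U p v / norm (grad U p)"

definition orthonormal_basis_of :: "'a::euclidean_space set \<Rightarrow> 'a set \<Rightarrow> bool" where
  "orthonormal_basis_of B T \<longleftrightarrow> finite B \<and> B \<subseteq> T \<and> span B = T \<and>
     (\<forall>b\<in>B. norm b = 1) \<and> pairwise orthogonal B"

text \<open>Mean curvature: 1/(n-1) times the sum of principal curvatures, i.e. the trace of the
  second fundamental form over an orthonormal basis of the tangent space.\<close>
definition mean_curvature :: "('a::euclidean_space \<Rightarrow> real) \<Rightarrow> 'a \<Rightarrow> real" where
  "mean_curvature U p =
     (let B = (SOME B. orthonormal_basis_of B (level_tangent U p))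
      in (\<Sum>e\<in>B. normal_curvature U p e) / (real DIM('a) - 1))"

end

theory Submission imports Defs begin

lemma ortho_expand:
  fixes B :: "'a::euclidean_space set"
  assumes fin: "finite B" and sp: "span B = UNIV" and nrm: "\<forall>b\<in>B. norm b = 1"
    and po: "pairwise orthogonal B"
  shows "x = (\<Sum>b\<in>B. (x \<bullet> b) *\<^sub>R b)"
proof -
  define y where "y = x - (\<Sum>b\<in>B. (x \<bullet> b) *\<^sub>R b)"
  have yc: "orthogonal y c" if c: "c \<in> B" for c
  proof -
    have "(\<Sum>b\<in>B. (x \<bullet> b) *\<^sub>R b) \<bullet> c = (\<Sum>b\<in>B. (x \<bullet> b) * (b \<bullet> c))"
      by (simp add: inner_sum_left)
    also have "\<dots> = (x \<bullet> c) * (c \<bullet> c) + (\<Sum>b\<in>B-{c}. (x \<bullet> b) * (b \<bullet> c))"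
      using fin c by (simp add: sum.remove)
    also have "(\<Sum>b\<in>B-{c}. (x \<bullet> b) * (b \<bullet> c)) = 0"
      using po c by (intro sum.neutral) (auto simp: pairwise_def orthogonal_def)
    also have "c \<bullet> c = 1" using nrm c by (metis norm_eq_1)
    finally show ?thesis by (simp add: y_def orthogonal_def inner_diff_left)
  qed
  have "orthogonal y y"
    by (rule orthogonal_to_span[of y B]) (use sp yc in auto)
  then have "y = 0" by (simp add: orthogonal_def)
  then show ?thesis by (simp add: y_def)
qed

lemma trace_indep:
  fixes B :: "'a::euclidean_space set" and f :: "'a \<Rightarrow> 'a"
  assumes fin: "finite B" and sp: "span B = UNIV" and nrm: "\<forall>b\<in>B. norm b = 1"
    and po: "pairwise orthogonal B" and lin: "linear f"
  shows "(\<Sum>b\<in>B. f b \<bullet> b) = (\<Sum>c\<in>Basis. f c \<bullet> c)"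
proof -
  have "(\<Sum>b\<in>B. f b \<bullet> b) = (\<Sum>b\<in>B. f (\<Sum>c\<in>Basis. (b \<bullet> c) *\<^sub>R c) \<bullet> b)"
    by (simp add: euclidean_representation)
  also have "\<dots> = (\<Sum>b\<in>B. \<Sum>c\<in>Basis. (b \<bullet> c) * (f c \<bullet> b))"
    by (simp add: linear_sum[OF lin] linear_scale[OF lin] inner_sum_left)
  also have "\<dots> = (\<Sum>c\<in>Basis. \<Sum>b\<in>B. (b \<bullet> c) * (f c \<bullet> b))"
    by (rule sum.swap)
  also have "\<dots> = (\<Sum>c\<in>Basis. f c \<bullet> (\<Sum>b\<in>B. (c \<bullet> b) *\<^sub>R b))"
    by (simp add: inner_sum_right inner_commute mult.commute)
  also have "\<dots> = (\<Sum>c\<in>Basis. f c \<bullet> c)"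
    using ortho_expand[OF fin sp nrm po] by simp
  finally show ?thesis .
qed

lemma mean_curv_formula:
  fixes U :: "'a::euclidean_space \<Rightarrow> real"
  assumes dim: "DIM('a) \<ge> 2" and gp: "grad U p \<noteq> 0"
    and lin: "linear (frechet_derivative (grad U) (at p))"
    and lap: "laplacian U p = 0"
  shows "(real DIM('a) - 1) * mean_curvature U p =
     frechet_derivative (grad U) (at p) (grad U p) \<bullet> grad U p / norm (grad U p) ^ 3"
proof -
  define D where "D = frechet_derivative (grad U) (at p)"
  define g where "g = grad U p"
  define T where "T = level_tangent U p"
  define N where "N = g /\<^sub>R norm g"
  have gn: "norm g > 0" using gp by (simp add: g_def)
  have subT: "subspace T"
    unfolding T_def level_tangent_def subspace_def by (auto simp: inner_add_left)
  have ex: "\<exists>B. orthonormal_basis_of B T"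
  proof -
    obtain B where "B \<subseteq> T" "pairwise orthogonal B" "\<And>x. x \<in> B \<Longrightarrow> norm x = 1"
      "independent B" "span B = T"
      using orthonormal_basis_subspace[OF subT] by metis
    then show ?thesis unfolding orthonormal_basis_of_def
      using finiteI_independent by blast
  qed
  define B where "B = (SOME B. orthonormal_basis_of B T)"
  have oB: "orthonormal_basis_of B T" unfolding B_def using someI_ex[OF ex] .
  then have finB: "finite B" and BT: "B \<subseteq> T" and spB: "span B = T"
    and nB: "\<forall>b\<in>B. norm b = 1" and poB: "pairwise orthogonal B"
    unfolding orthonormal_basis_of_def by auto
  have Ng: "N \<bullet> g = norm g" using gn by (simp add: N_def inner_commute) (simp add: power2_norm_eq_inner[symmetric] power2_eq_square)
  have NB: "N \<notin> B" using BT Ng gn by (auto simp: T_def level_tangent_def g_def inner_commute)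
  have orthNB: "orthogonal N b" if "b \<in> B" for b
    using BT that by (auto simp: T_def level_tangent_def orthogonal_def N_def g_def inner_commute)
  have nN: "norm N = 1" using gn by (simp add: N_def)
  have fin': "finite (insert N B)" using finB by simp
  have n': "\<forall>b\<in>insert N B. norm b = 1" using nB nN by simp
  have po': "pairwise orthogonal (insert N B)"
    using poB orthNB by (auto simp: pairwise_insert orthogonal_commute)
  have sp': "span (insert N B) = UNIV"
  proof -
    have "x \<in> span (insert N B)" for x
    proof -
      have "x - (x \<bullet> N) *\<^sub>R N \<in> T"
      proof -
        have "(x - (x \<bullet> N) *\<^sub>R N) \<bullet> g = x \<bullet> g - (x \<bullet> N) * (N \<bullet> g)"
          by (simp add: inner_diff_left)
        also have "\<dots> = 0" using Ng gn by (simp add: N_def inner_commute)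
        finally show ?thesis unfolding T_def level_tangent_def g_def by simp
      qed
      then have "x - (x \<bullet> N) *\<^sub>R N \<in> span B" using spB by simp
      then have "x - (x \<bullet> N) *\<^sub>R N \<in> span (insert N B)" by (meson span_mono subset_insertI subsetD)
      moreover have "(x \<bullet> N) *\<^sub>R N \<in> span (insert N B)" by (simp add: span_base span_mul)
      ultimately have "x - (x \<bullet> N) *\<^sub>R N + (x \<bullet> N) *\<^sub>R N \<in> span (insert N B)" by (rule span_add)
      then show ?thesis by simp
    qed
    then show ?thesis by auto
  qed
  have "(\<Sum>b\<in>insert N B. D b \<bullet> b) = (\<Sum>c\<in>Basis. D c \<bullet> c)"
    using trace_indep[OF fin' sp' n' po'] lin by (simp add: D_def)
  also have "\<dots> = 0" using lap by (simp add: laplacian_def second_dir_deriv_def D_def)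
  finally have "D N \<bullet> N + (\<Sum>b\<in>B. D b \<bullet> b) = 0" using finB NB by simp
  then have sumB: "(\<Sum>b\<in>B. D b \<bullet> b) = - (D N \<bullet> N)" by linarith
  have DN: "D N \<bullet> N = D g \<bullet> g / norm g ^ 2"
    using linear_scale[OF lin[folded D_def]] by (simp add: N_def power2_eq_square field_simps)
  have "mean_curvature U p = (\<Sum>e\<in>B. normal_curvature U p e) / (real DIM('a) - 1)"
    unfolding mean_curvature_def B_def T_def by simp
  also have "(\<Sum>e\<in>B. normal_curvature U p e) = - (\<Sum>b\<in>B. D b \<bullet> b) / norm g"
    by (simp add: normal_curvature_def second_dir_deriv_def D_def g_def sum_divide_distrib sum_negf)
  finally have "(real DIM('a) - 1) * mean_curvature U p = D N \<bullet> N / norm g"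
    using dim sumB by simp
  also have "\<dots> = D g \<bullet> g / norm g ^ 3" using DN gn by (simp add: power2_eq_square power3_eq_cube)
  finally show ?thesis by (simp add: D_def g_def)
qed


theorem theorem2:
  fixes U :: "'a::euclidean_space \<Rightarrow> real"
    and \<Omega> :: "'a set"
    and \<alpha> :: "real \<Rightarrow> 'a"
    and \<delta> :: real
  assumes dim: "DIM('a) \<ge> 2"
    and dom: "open \<Omega>" "connected \<Omega>"
    and harm: "harmonic_on \<Omega> U"
    and nocrit: "\<forall>x\<in>\<Omega>. grad U x \<noteq> 0"
    and delta: "\<delta> > 0"
    and curve: "\<forall>s\<in>{-\<delta><..<\<delta>}. \<alpha> s \<in> \<Omega> \<and>
        (\<alpha> has_vector_derivative (grad U (\<alpha> s) /\<^sub>R norm (grad U (\<alpha> s)))) (at s)"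
  shows "\<forall>s\<in>{-\<delta><..<\<delta>}.
     norm (grad U (\<alpha> s)) =
       norm (grad U (\<alpha> 0)) *
       exp ((real DIM('a) - 1) * (LBINT \<xi>=0..s. mean_curvature U (\<alpha> \<xi>)))"
proof
  fix s assume s: "s \<in> {-\<delta><..<\<delta>}"
  define g where "g = grad U"
  define D where "D = (\<lambda>x. frechet_derivative (grad U) (at x))"
  define m where "m = real DIM('a) - 1"
  have m: "m > 0" using dim by (simp add: m_def)
  define J where "J = {-\<delta><..<\<delta>}"
  have C2: "C2_on \<Omega> U" and lap: "\<forall>x\<in>\<Omega>. laplacian U x = 0"
    using harm by (auto simp: harmonic_on_def)
  have gdiff: "\<And>x. x \<in> \<Omega> \<Longrightarrow> g differentiable (at x)"
    using C2 by (simp add: C2_on_def g_def)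
  have gder: "\<And>x. x \<in> \<Omega> \<Longrightarrow> (g has_derivative D x) (at x)"
    using gdiff by (simp add: frechet_derivative_works D_def g_def)
  have Dlin: "\<And>x. x \<in> \<Omega> \<Longrightarrow> linear (D x)"
    using gder has_derivative_linear by blast
  have gcont: "continuous_on \<Omega> g"
    using gdiff by (simp add: continuous_at_imp_continuous_on differentiable_imp_continuous_within)
  have Dcont: "\<And>u v. continuous_on \<Omega> (\<lambda>x. D x u \<bullet> v)"
    using C2 by (simp add: C2_on_def D_def)
  define \<phi> where "\<phi> = (\<lambda>x. D x (g x) \<bullet> g x / norm (g x) ^ 3 / m)"
  have mc: "\<And>x. x \<in> \<Omega> \<Longrightarrow> mean_curvature U x = \<phi> x"
  proof -
    fix x assume x: "x \<in> \<Omega>"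
    have "m * mean_curvature U x = D x (g x) \<bullet> g x / norm (g x) ^ 3"
      using mean_curv_formula[OF dim, of U x] nocrit x Dlin[OF x] lap
      by (simp add: m_def D_def g_def)
    then have "mean_curvature U x = (D x (g x) \<bullet> g x / norm (g x) ^ 3) / m"
      using m by (metis nonzero_mult_div_cancel_left less_irrefl)
    then show "mean_curvature U x = \<phi> x" by (simp only: \<phi>_def)
  qed
  have expand: "D x (g x) \<bullet> g x = (\<Sum>b\<in>Basis. \<Sum>c\<in>Basis. (g x \<bullet> b) * (g x \<bullet> c) * (D x b \<bullet> c))"
    if x: "x \<in> \<Omega>" for x
  proof -
    have "D x (g x) \<bullet> g x = D x (\<Sum>b\<in>Basis. (g x \<bullet> b) *\<^sub>R b) \<bullet> (\<Sum>c\<in>Basis. (g x \<bullet> c) *\<^sub>R c)"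
      by (simp add: euclidean_representation)
    also have "\<dots> = (\<Sum>b\<in>Basis. \<Sum>c\<in>Basis. (g x \<bullet> b) * (g x \<bullet> c) * (D x b \<bullet> c))"
      by (simp add: linear_sum[OF Dlin[OF x]] linear_scale[OF Dlin[OF x]] inner_sum_left
          inner_sum_right sum_distrib_left mult.assoc)
         (subst sum.swap, simp add: mult.left_commute)
    finally show ?thesis .
  qed
  have phicont: "continuous_on \<Omega> \<phi>"
  proof -
    have "continuous_on \<Omega> (\<lambda>x. (\<Sum>b\<in>Basis. \<Sum>c\<in>Basis. (g x \<bullet> b) * (g x \<bullet> c) * (D x b \<bullet> c)))"
      by (intro continuous_intros gcont Dcont)
    then have c1: "continuous_on \<Omega> (\<lambda>x. D x (g x) \<bullet> g x)"
      using continuous_on_cong[of \<Omega> \<Omega> "\<lambda>x. D x (g x) \<bullet> g x"] expand by fastforce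
    show ?thesis unfolding \<phi>_def
      using nocrit m by (intro continuous_intros c1 gcont) (auto simp: g_def)
  qed
  have acont: "continuous_on J \<alpha>"
    using curve unfolding J_def
    by (intro continuous_at_imp_continuous_on ballI)
       (meson has_vector_derivative_continuous)
  have aJ: "\<And>t. t \<in> J \<Longrightarrow> \<alpha> t \<in> \<Omega>" using curve by (simp add: J_def)
  define F where "F = (\<lambda>t. ln (norm (g (\<alpha> t))) / m)"
  have Fder: "(F has_real_derivative mean_curvature U (\<alpha> t)) (at t)" if t: "t \<in> J" for t
  proof -
    define y where "y = g (\<alpha> t)"
    define N where "N = y /\<^sub>R norm y"
    have y0: "y \<noteq> 0" using nocrit aJ[OF t] by (simp add: y_def g_def)
    have ad: "(\<alpha> has_derivative (\<lambda>h. h *\<^sub>R N)) (at t)"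
      using curve t by (simp add: J_def has_vector_derivative_def N_def y_def g_def)
    have ga: "((g \<circ> \<alpha>) has_derivative (\<lambda>h. D (\<alpha> t) (h *\<^sub>R N))) (at t)"
      using diff_chain_at[OF ad gder[OF aJ[OF t]]] by (simp add: o_def)
    have ga2: "((g \<circ> \<alpha>) has_derivative (\<lambda>h. h *\<^sub>R D (\<alpha> t) N)) (at t)"
      using ga linear_scale[OF Dlin[OF aJ[OF t]]] by simp
    have na: "((\<lambda>t. norm (g (\<alpha> t))) has_derivative (\<lambda>h. (h *\<^sub>R D (\<alpha> t) N) \<bullet> sgn y)) (at t)"
      using diff_chain_at[OF ga2 has_derivative_norm[of "(g \<circ> \<alpha>) t"]] y0
      by (simp add: o_def y_def)
    have na2: "((\<lambda>t. norm (g (\<alpha> t))) has_real_derivative (D (\<alpha> t) N \<bullet> N)) (at t)"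
      by (rule has_derivative_imp_has_field_derivative[OF na])
         (simp add: o_def N_def sgn_div_norm)
    have ln2: "((\<lambda>t. ln (norm (g (\<alpha> t)))) has_real_derivative inverse (norm y) * (D (\<alpha> t) N \<bullet> N)) (at t)"
      using DERIV_chain2[OF DERIV_ln na2] y0 by (simp add: y_def)
    have val: "inverse (norm y) * (D (\<alpha> t) N \<bullet> N) / m = \<phi> (\<alpha> t)"
      using linear_scale[OF Dlin[OF aJ[OF t]]] y0
      by (simp add: \<phi>_def N_def y_def[symmetric] power3_eq_cube field_simps)
    show ?thesis
      using DERIV_cdivide[OF ln2, of m] val mc[OF aJ[OF t]] unfolding F_def by simp
  qed
  define I where "I = {min 0 s..max 0 s}"
  have IJ: "I \<subseteq> J" using s delta by (auto simp: I_def J_def)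
  have fcont: "continuous_on I (\<lambda>t. mean_curvature U (\<alpha> t))"
  proof -
    have "continuous_on J (\<lambda>t. \<phi> (\<alpha> t))"
      using continuous_on_compose2[OF phicont acont] aJ by auto
    then have "continuous_on I (\<lambda>t. \<phi> (\<alpha> t))" using IJ continuous_on_subset by blast
    then show ?thesis
      using continuous_on_cong[of I I "\<lambda>t. \<phi> (\<alpha> t)" "\<lambda>t. mean_curvature U (\<alpha> t)"] IJ aJ mc
      by (metis subsetD)
  qed
  have "interval_lebesgue_integral lborel (ereal 0) (ereal s) (\<lambda>\<xi>. mean_curvature U (\<alpha> \<xi>)) = F s - F 0"
  proof (rule interval_integral_FTC_finite)
    show "continuous_on {min 0 s..max 0 s} (\<lambda>t. mean_curvature U (\<alpha> t))"
      using fcont by (simp add: I_def)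
    fix x assume "min 0 s \<le> x" "x \<le> max 0 s"
    then have "x \<in> J" using IJ by (auto simp: I_def)
    then show "(F has_vector_derivative mean_curvature U (\<alpha> x)) (at x within {min 0 s..max 0 s})"
      using Fder has_real_derivative_iff_has_vector_derivative has_vector_derivative_at_within
      by blast
  qed
  then have "(LBINT \<xi>=0..s. mean_curvature U (\<alpha> \<xi>)) = F s - F 0"
    by (simp add: zero_ereal_def)
  then have eq: "m * (LBINT \<xi>=0..s. mean_curvature U (\<alpha> \<xi>)) = ln (norm (g (\<alpha> s))) - ln (norm (g (\<alpha> 0)))"
    using m by (simp add: F_def field_simps)
  have p0: "norm (g (\<alpha> s)) > 0" "norm (g (\<alpha> 0)) > 0"
    using aJ nocrit s delta by (auto simp: J_def g_def)
  have "norm (g (\<alpha> 0)) * exp (m * (LBINT \<xi>=0..s. mean_curvature U (\<alpha> \<xi>))) = norm (g (\<alpha> s))"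
    unfolding eq using p0 by (simp add: exp_diff)
  then show "norm (grad U (\<alpha> s)) =
       norm (grad U (\<alpha> 0)) *
       exp ((real DIM('a) - 1) * (LBINT \<xi>=0..s. mean_curvature U (\<alpha> \<xi>)))"
    by (simp add: g_def m_def)
qed
end
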